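(* Algorithm 2 is monotonic. Moreover, for a connected graph $G$ with $n\ge2$ nodes, diameter $D$, and nonnegative integer loads with initial discrepancy $K$, after at most $(8nD+1)\ln(\lceil nK^2/(2D^2)\rceil)+2nD^2$ rounds when $K\ge 2D$ (and at most $2nD^2$ rounds when $K<2D$), hence in $O(nD\log(nK/D)+nD^2)$ time, the graph reaches a $1$-Balanced state, after which the loads never change.
   Context: $G=(V,E)$ is an undirected connected graph, $n=|V|$, $D$ its diameter; each node $u$ holds an integer load $load(u)\ge 0$. $L_{max},L_{min}$ denote the current maximum and minimum load and the discrepancy is $K=L_{max}-L_{min}$. A state is $1$-Balanced if every two adjacent nodes have loads differing by at most $1$. Algorithm 2 (single proposal, discrete) proceeds in synchronous rounds; in each round, using the loads at the start of the round: (1) every node $u$ having at least one neighbor $v$ with $load(v)\le load(u)-2$ picks the first neighbor $v$ (in a fixed order of its neighbors) maximizing $load(u)-load(v)$ and sends $v$ a proposal of value $p_{uv}=\lfloor (load(u)-load(v))/2\rfloor$; (2) every node that received at least one proposal accepts exactly one proposal of maximum value; (3) all accepted transfers are executed simultaneously (each accepted proposal $p_{wu}$ moves $p_{wu}$ from $w$ to $u$), and nodes report their new loads to neighbors. An algorithm is monotonic if in every execution (a) each load transfer goes from a higher-loaded node to a less-loaded one, and (b) the maximum load never increases and the minimum load never decreases. *)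

theory Defs
  imports Complex_Main
begin

text \<open>The fixed order of the neighbours of a node u
  is a distinct list nbrs u whose elements are exactly the neighbours of u.\<close>

definition graph :: "'a set \<Rightarrow> ('a \<Rightarrow> 'a \<Rightarrow> bool) \<Rightarrow> bool" where
  "graph V E \<longleftrightarrow> finite V \<and> (\<forall>u v. E u v \<longrightarrow> u \<in> V \<and> v \<in> V)
     \<and> (\<forall>u v. E u v \<longrightarrow> E v u) \<and> (\<forall>u. \<not> E u u)"

definition neighbor_order :: "'a set \<Rightarrow> ('a \<Rightarrow> 'a \<Rightarrow> bool) \<Rightarrow> ('a \<Rightarrow> 'a list) \<Rightarrow> bool" where
  "neighbor_order V E nbrs \<longleftrightarrow> (\<forall>u\<in>V. distinct (nbrs u) \<and> set (nbrs u) = {v. E u v})"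

definition walk :: "('a \<Rightarrow> 'a \<Rightarrow> bool) \<Rightarrow> 'a list \<Rightarrow> bool" where
  "walk E xs \<longleftrightarrow> xs \<noteq> [] \<and> (\<forall>i. Suc i < length xs \<longrightarrow> E (xs ! i) (xs ! Suc i))"

definition connected_graph :: "'a set \<Rightarrow> ('a \<Rightarrow> 'a \<Rightarrow> bool) \<Rightarrow> bool" where
  "connected_graph V E \<longleftrightarrow> (\<forall>u\<in>V. \<forall>v\<in>V. \<exists>xs. walk E xs \<and> hd xs = u \<and> last xs = v)"

definition gdist :: "('a \<Rightarrow> 'a \<Rightarrow> bool) \<Rightarrow> 'a \<Rightarrow> 'a \<Rightarrow> nat" where
  "gdist E u v = (LEAST k. \<exists>xs. walk E xs \<and> hd xs = u \<and> last xs = v \<and> length xs = Suc k)"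

definition diameter :: "'a set \<Rightarrow> ('a \<Rightarrow> 'a \<Rightarrow> bool) \<Rightarrow> nat" where
  "diameter V E = Max {gdist E u v | u v. u \<in> V \<and> v \<in> V}"

type_synonym 'a loads = "'a \<Rightarrow> int"

definition Lmax :: "'a set \<Rightarrow> 'a loads \<Rightarrow> int" where
  "Lmax V L = Max (L ` V)"

definition Lmin :: "'a set \<Rightarrow> 'a loads \<Rightarrow> int" where
  "Lmin V L = Min (L ` V)"

definition discrepancy :: "'a set \<Rightarrow> 'a loads \<Rightarrow> int" where
  "discrepancy V L = Lmax V L - Lmin V L"

definition one_balanced :: "('a \<Rightarrow> 'a \<Rightarrow> bool) \<Rightarrow> 'a loads \<Rightarrow> bool" where
  "one_balanced E L \<longleftrightarrow> (\<forall>u v. E u v \<longrightarrow> \<bar>L u - L v\<bar> \<le> 1)"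

definition proposes :: "('a \<Rightarrow> 'a list) \<Rightarrow> 'a loads \<Rightarrow> 'a \<Rightarrow> bool" where
  "proposes nbrs L u \<longleftrightarrow> (\<exists>v\<in>set (nbrs u). L v \<le> L u - 2)"

definition target :: "('a \<Rightarrow> 'a list) \<Rightarrow> 'a loads \<Rightarrow> 'a \<Rightarrow> 'a" where
  "target nbrs L u =
     (let m = Max ((\<lambda>v. L u - L v) ` set (nbrs u))
      in hd (filter (\<lambda>v. L u - L v = m) (nbrs u)))"

definition prop_val :: "'a loads \<Rightarrow> 'a \<Rightarrow> 'a \<Rightarrow> int" where
  "prop_val L u v = \<lfloor>real_of_int (L u - L v) / 2\<rfloor>"

definition proposal :: "('a \<Rightarrow> 'a list) \<Rightarrow> 'a loads \<Rightarrow> 'a \<Rightarrow> 'a \<Rightarrow> bool" where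
  "proposal nbrs L w u \<longleftrightarrow> proposes nbrs L w \<and> target nbrs L w = u"

text \<open>An acceptance choice: acc u = Some w means u accepts the proposal of w.\<close>
definition valid_accept :: "'a set \<Rightarrow> ('a \<Rightarrow> 'a list) \<Rightarrow> 'a loads \<Rightarrow> ('a \<Rightarrow> 'a option) \<Rightarrow> bool" where
  "valid_accept V nbrs L acc \<longleftrightarrow>
     (\<forall>u. u \<notin> V \<longrightarrow> acc u = None) \<and>
     (\<forall>u\<in>V. (acc u = None \<longleftrightarrow> \<not> (\<exists>w\<in>V. proposal nbrs L w u)) \<and>
             (\<forall>w. acc u = Some w \<longrightarrow> w \<in> V \<and> proposal nbrs L w u \<and>
                   (\<forall>w'\<in>V. proposal nbrs L w' u \<longrightarrow> prop_val L w' u \<le> prop_val L w u)))"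

definition apply_transfers :: "'a set \<Rightarrow> 'a loads \<Rightarrow> ('a \<Rightarrow> 'a option) \<Rightarrow> 'a loads" where
  "apply_transfers V L acc u =
     L u + (case acc u of Some w \<Rightarrow> prop_val L w u | None \<Rightarrow> 0)
         - (\<Sum>v\<in>V. if acc v = Some u then prop_val L u v else 0)"

text \<open>An execution: Ls t are the loads at the start of round t, accs t the acceptance
  choices made in round t.\<close>
definition execution :: "'a set \<Rightarrow> ('a \<Rightarrow> 'a list) \<Rightarrow> (nat \<Rightarrow> 'a loads) \<Rightarrow> (nat \<Rightarrow> 'a \<Rightarrow> 'a option) \<Rightarrow> bool" where
  "execution V nbrs Ls accs \<longleftrightarrow>
     (\<forall>t. valid_accept V nbrs (Ls t) (accs t) \<and> Ls (Suc t) = apply_transfers V (Ls t) (accs t))"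

definition monotonic_execution :: "'a set \<Rightarrow> (nat \<Rightarrow> 'a loads) \<Rightarrow> (nat \<Rightarrow> 'a \<Rightarrow> 'a option) \<Rightarrow> bool" where
  "monotonic_execution V Ls accs \<longleftrightarrow>
     (\<forall>t u w. accs t u = Some w \<longrightarrow> Ls t w > Ls t u) \<and>
     (\<forall>t. Lmax V (Ls (Suc t)) \<le> Lmax V (Ls t) \<and> Lmin V (Ls t) \<le> Lmin V (Ls (Suc t)))"

end

theory Submission imports Defs begin

lemma pv_div: "prop_val L u v = (L u - L v) div 2"
  unfolding prop_val_def using floor_divide_of_int_eq[of "L u - L v" 2] by simp

lemma cs_int:
  fixes q :: "'b \<Rightarrow> int"
  assumes "finite R"
  shows "(\<Sum>u\<in>R. q u)^2 \<le> int (card R) * (\<Sum>u\<in>R. (q u)^2)"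
proof -
  have "0 \<le> (\<Sum>u\<in>R. \<Sum>v\<in>R. (q u - q v)^2)" by (intro sum_nonneg) auto
  also have "(\<Sum>u\<in>R. \<Sum>v\<in>R. (q u - q v)^2) =
     (\<Sum>u\<in>R. \<Sum>v\<in>R. (q u)^2) + (\<Sum>u\<in>R. \<Sum>v\<in>R. (q v)^2) - 2 * (\<Sum>u\<in>R. \<Sum>v\<in>R. q u * q v)"
    by (simp add: power2_diff sum.distrib sum_subtractf sum_distrib_left algebra_simps)
  also have "\<dots> = 2 * (int (card R) * (\<Sum>u\<in>R. (q u)^2)) - 2 * (\<Sum>u\<in>R. q u)^2"
    by (simp add: power2_eq_square sum_distrib_left sum_distrib_right algebra_simps)
  finally show ?thesis by simp
qed



locale G =
  fixes V :: "'a set" and E :: "'a \<Rightarrow> 'a \<Rightarrow> bool" and nbrs :: "'a \<Rightarrow> 'a list"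
  assumes gr: "graph V E" and no: "neighbor_order V E nbrs"
begin

lemma finV: "finite V" using gr unfolding graph_def by auto
lemma E_V: "E u v \<Longrightarrow> u \<in> V \<and> v \<in> V" using gr unfolding graph_def by auto
lemma E_sym: "E u v \<Longrightarrow> E v u" using gr unfolding graph_def by auto
lemma nbrs_set: "u \<in> V \<Longrightarrow> set (nbrs u) = {v. E u v}" using no unfolding neighbor_order_def by auto

lemma target_props:
  assumes u: "u \<in> V" and p: "proposes nbrs L u"
  shows "target nbrs L u \<in> set (nbrs u) \<and> (\<forall>v\<in>set (nbrs u). L (target nbrs L u) \<le> L v)
      \<and> L (target nbrs L u) \<le> L u - 2"
proof -
  define m where "m = Max ((\<lambda>v. L u - L v) ` set (nbrs u))"
  from p obtain v0 where v0: "v0 \<in> set (nbrs u)" "L v0 \<le> L u - 2" unfolding proposes_def by auto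
  have fin: "finite ((\<lambda>v. L u - L v) ` set (nbrs u))" by simp
  have ne: "(\<lambda>v. L u - L v) ` set (nbrs u) \<noteq> {}" using v0 by auto
  have "m \<in> (\<lambda>v. L u - L v) ` set (nbrs u)" unfolding m_def using Max_in[OF fin ne] .
  then obtain v1 where v1: "v1 \<in> set (nbrs u)" "L u - L v1 = m" by auto
  have mge: "\<And>v. v \<in> set (nbrs u) \<Longrightarrow> L u - L v \<le> m" unfolding m_def using fin by auto
  have fne: "filter (\<lambda>v. L u - L v = m) (nbrs u) \<noteq> []" using v1 by (auto simp: filter_empty_conv)
  define t where "t = hd (filter (\<lambda>v. L u - L v = m) (nbrs u))"
  have "t \<in> set (filter (\<lambda>v. L u - L v = m) (nbrs u))" unfolding t_def using fne by (rule hd_in_set)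
  hence t: "t \<in> set (nbrs u)" "L u - L t = m" by auto
  have tt: "target nbrs L u = t" unfolding target_def t_def m_def Let_def by simp
  show ?thesis unfolding tt using t mge[of v0] v0 mge by force
qed

lemma accept_props:
  assumes va: "valid_accept V nbrs L acc" and a: "acc u = Some w"
  shows "w \<in> V \<and> u \<in> V \<and> proposes nbrs L w \<and> target nbrs L w = u \<and> L w - L u \<ge> 2
     \<and> prop_val L w u \<ge> 1 \<and> 2 * prop_val L w u \<le> L w - L u \<and> L w - L u \<le> 2 * prop_val L w u + 1
     \<and> (\<forall>w'\<in>V. proposal nbrs L w' u \<longrightarrow> prop_val L w' u \<le> prop_val L w u)"
proof -
  have uV: "u \<in> V" using va a unfolding valid_accept_def by (metis option.distinct(1))
  have *: "w \<in> V \<and> proposal nbrs L w u \<and> (\<forall>w'\<in>V. proposal nbrs L w' u \<longrightarrow> prop_val L w' u \<le> prop_val L w u)"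
    using va a uV unfolding valid_accept_def by blast
  hence p: "proposes nbrs L w" "target nbrs L w = u" unfolding proposal_def by auto
  have "L u \<le> L w - 2" using target_props[of w L] * p by auto
  thus ?thesis using * p uV by (auto simp: pv_div)
qed

lemma no_accept_outside: "valid_accept V nbrs L acc \<Longrightarrow> u \<notin> V \<Longrightarrow> acc u = None"
  unfolding valid_accept_def by auto


definition inv :: "'a loads \<Rightarrow> ('a \<Rightarrow> 'a option) \<Rightarrow> 'a \<Rightarrow> int" where
  "inv L acc u = (case acc u of Some w \<Rightarrow> prop_val L w u | None \<Rightarrow> 0)"
definition outv :: "'a loads \<Rightarrow> ('a \<Rightarrow> 'a option) \<Rightarrow> 'a \<Rightarrow> int" where
  "outv L acc u = (\<Sum>v\<in>V. if acc v = Some u then prop_val L u v else 0)"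
definition gain :: "'a loads \<Rightarrow> ('a \<Rightarrow> 'a option) \<Rightarrow> 'a \<Rightarrow> int" where
  "gain L acc v = (case acc v of Some w \<Rightarrow> 2 * prop_val L w v * (L w - L v - prop_val L w v) | None \<Rightarrow> 0)"

lemma at_eq: "apply_transfers V L acc u = L u + inv L acc u - outv L acc u"
  unfolding apply_transfers_def inv_def outv_def by simp

lemma sum_single:
  assumes "finite A" "\<And>v. v \<in> A \<Longrightarrow> P v \<Longrightarrow> v = t"
  shows "(\<Sum>v\<in>A. if P v then f v else (0::int)) = (if t \<in> A \<and> P t then f t else 0)"
proof -
  have "(\<Sum>v\<in>A. if P v then f v else (0::int)) = (\<Sum>v\<in>A. if v = t then (if P t then f t else 0) else 0)"
  proof (rule sum.cong[OF refl])
    fix v assume v: "v \<in> A"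
    show "(if P v then f v else 0) = (if v = t then (if P t then f t else 0) else 0)"
      using assms(2)[OF v] by (cases "P v") auto
  qed
  also have "\<dots> = (if t \<in> A \<and> P t then f t else 0)" using assms(1) by (simp add: sum.delta)
  finally show ?thesis .
qed

lemma sum_swap_acc:
  assumes va: "valid_accept V nbrs L acc"
  shows "(\<Sum>u\<in>V. \<Sum>v\<in>V. if acc v = Some u then g u v else (0::int)) =
         (\<Sum>v\<in>V. case acc v of Some w \<Rightarrow> g w v | None \<Rightarrow> 0)"
proof -
  have "(\<Sum>u\<in>V. \<Sum>v\<in>V. if acc v = Some u then g u v else (0::int)) =
        (\<Sum>v\<in>V. \<Sum>u\<in>V. if acc v = Some u then g u v else (0::int))" by (rule sum.swap)
  also have "\<dots> = (\<Sum>v\<in>V. case acc v of Some w \<Rightarrow> g w v | None \<Rightarrow> 0)"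
  proof (rule sum.cong[OF refl])
    fix v assume "v \<in> V"
    show "(\<Sum>u\<in>V. if acc v = Some u then g u v else (0::int)) = (case acc v of Some w \<Rightarrow> g w v | None \<Rightarrow> 0)"
    proof (cases "acc v")
      case None thus ?thesis by simp
    next
      case (Some w)
      have "w \<in> V" using accept_props[OF va Some] by simp
      have "(\<Sum>u\<in>V. if acc v = Some u then g u v else (0::int)) = (if w \<in> V \<and> acc v = Some w then g w v else 0)"
        by (rule sum_single[OF finV]) (simp add: Some)
      thus ?thesis using Some \<open>w \<in> V\<close> by simp
    qed
  qed
  finally show ?thesis .
qed

lemma out_unique:
  assumes va: "valid_accept V nbrs L acc" and "acc v = Some u"
  shows "v = target nbrs L u"
  using accept_props[OF va assms(2)] by simp

lemma outv_sq:
  assumes va: "valid_accept V nbrs L acc"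
  shows "(outv L acc u)^2 = (\<Sum>v\<in>V. if acc v = Some u then (prop_val L u v)^2 else 0)"
proof -
  let ?t = "target nbrs L u"
  have a: "outv L acc u = (if ?t \<in> V \<and> acc ?t = Some u then prop_val L u ?t else 0)"
    unfolding outv_def by (rule sum_single[OF finV]) (metis out_unique[OF va])
  have b: "(\<Sum>v\<in>V. if acc v = Some u then (prop_val L u v)^2 else 0) = (if ?t \<in> V \<and> acc ?t = Some u then (prop_val L u ?t)^2 else 0)"
    by (rule sum_single[OF finV]) (metis out_unique[OF va])
  show ?thesis unfolding a b by simp
qed

lemma inv_nonneg: "valid_accept V nbrs L acc \<Longrightarrow> inv L acc u \<ge> 0"
  unfolding inv_def by (cases "acc u") (auto dest: accept_props)

lemma outv_nonneg: "valid_accept V nbrs L acc \<Longrightarrow> outv L acc u \<ge> 0"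
  unfolding outv_def by (intro sum_nonneg) (auto dest: accept_props)

lemma sum_inv: "(\<Sum>u\<in>V. f u * inv L acc u) = (\<Sum>v\<in>V. case acc v of Some w \<Rightarrow> prop_val L w v * f v | None \<Rightarrow> 0)"
  unfolding inv_def by (rule sum.cong) (auto split: option.split)

lemma sum_outv:
  assumes va: "valid_accept V nbrs L acc"
  shows "(\<Sum>u\<in>V. f u * outv L acc u) = (\<Sum>v\<in>V. case acc v of Some w \<Rightarrow> prop_val L w v * f w | None \<Rightarrow> 0)"
proof -
  have "(\<Sum>u\<in>V. f u * outv L acc u) = (\<Sum>u\<in>V. \<Sum>v\<in>V. if acc v = Some u then prop_val L u v * f u else 0)"
    unfolding outv_def sum_distrib_left by (rule sum.cong) (auto intro!: sum.cong)
  also have "\<dots> = (\<Sum>v\<in>V. case acc v of Some w \<Rightarrow> prop_val L w v * f w | None \<Rightarrow> 0)" by (rule sum_swap_acc[OF va])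
  finally show ?thesis .
qed

lemma sum_conserve:
  assumes va: "valid_accept V nbrs L acc"
  shows "(\<Sum>u\<in>V. apply_transfers V L acc u) = (\<Sum>u\<in>V. L u)"
proof -
  have "(\<Sum>u\<in>V. 1 * inv L acc u) = (\<Sum>u\<in>V. 1 * outv L acc u)"
    unfolding sum_inv sum_outv[OF va] by simp
  thus ?thesis unfolding at_eq by (simp add: sum.distrib sum_subtractf)
qed

lemma Q_decrease:
  assumes va: "valid_accept V nbrs L acc"
  shows "(\<Sum>u\<in>V. (apply_transfers V L acc u)^2) \<le> (\<Sum>u\<in>V. (L u)^2) - (\<Sum>v\<in>V. gain L acc v)"
proof -
  let ?i = "inv L acc" and ?o = "outv L acc"
  have "(\<Sum>u\<in>V. (apply_transfers V L acc u)^2) = (\<Sum>u\<in>V. (L u)^2 + 2 * (L u * ?i u) - 2 * (L u * ?o u) + (?i u - ?o u)^2)"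
    unfolding at_eq by (rule sum.cong) (auto simp: power2_eq_square algebra_simps)
  also have "\<dots> \<le> (\<Sum>u\<in>V. (L u)^2 + 2 * (L u * ?i u) - 2 * (L u * ?o u) + (1 * ?i u * ?i u + (?o u)^2))"
  proof (rule sum_mono)
    fix u assume "u \<in> V"
    have "0 \<le> ?i u * ?o u" using inv_nonneg[OF va] outv_nonneg[OF va] by simp
    thus "(L u)^2 + 2 * (L u * ?i u) - 2 * (L u * ?o u) + (?i u - ?o u)^2 \<le> (L u)^2 + 2 * (L u * ?i u) - 2 * (L u * ?o u) + (1 * ?i u * ?i u + (?o u)^2)"
      by (simp add: power2_eq_square algebra_simps)
  qed
  also have "\<dots> = (\<Sum>u\<in>V. (L u)^2) + 2 * (\<Sum>u\<in>V. L u * ?i u) - 2 * (\<Sum>u\<in>V. L u * ?o u) + (\<Sum>u\<in>V. ?i u * ?i u) + (\<Sum>u\<in>V. (?o u)^2)"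
    by (simp add: sum.distrib sum_subtractf sum_distrib_left)
  also have "(\<Sum>u\<in>V. (?o u)^2) = (\<Sum>v\<in>V. case acc v of Some w \<Rightarrow> (prop_val L w v)^2 | None \<Rightarrow> 0)"
    unfolding outv_sq[OF va] by (rule sum_swap_acc[OF va])
  also have "(\<Sum>u\<in>V. ?i u * ?i u) = (\<Sum>v\<in>V. case acc v of Some w \<Rightarrow> prop_val L w v * ?i v | None \<Rightarrow> 0)"
    by (rule sum_inv)
  also have "\<dots> = (\<Sum>v\<in>V. case acc v of Some w \<Rightarrow> (prop_val L w v)^2 | None \<Rightarrow> 0)"
    by (rule sum.cong) (auto simp: inv_def power2_eq_square split: option.split)
  also note sum_inv also note sum_outv[OF va]
  also have "(\<Sum>u\<in>V. (L u)^2) + 2 * (\<Sum>v\<in>V. case acc v of Some w \<Rightarrow> prop_val L w v * L v | None \<Rightarrow> 0)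
     - 2 * (\<Sum>v\<in>V. case acc v of Some w \<Rightarrow> prop_val L w v * L w | None \<Rightarrow> 0)
     + (\<Sum>v\<in>V. case acc v of Some w \<Rightarrow> (prop_val L w v)^2 | None \<Rightarrow> 0)
     + (\<Sum>v\<in>V. case acc v of Some w \<Rightarrow> (prop_val L w v)^2 | None \<Rightarrow> 0)
     = (\<Sum>u\<in>V. (L u)^2) - (\<Sum>v\<in>V. gain L acc v)"
  proof -
    have "(\<Sum>v\<in>V. gain L acc v) = 2 * (\<Sum>v\<in>V. case acc v of Some w \<Rightarrow> prop_val L w v * L w | None \<Rightarrow> 0)
       - 2 * (\<Sum>v\<in>V. case acc v of Some w \<Rightarrow> prop_val L w v * L v | None \<Rightarrow> 0)
       - 2 * (\<Sum>v\<in>V. case acc v of Some w \<Rightarrow> (prop_val L w v)^2 | None \<Rightarrow> 0)"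
      unfolding sum_distrib_left sum_subtractf[symmetric] gain_def
      by (rule sum.cong) (auto simp: power2_eq_square algebra_simps split: option.split)
    thus ?thesis by simp
  qed
  finally show ?thesis .
qed

lemma gain_nonneg: "valid_accept V nbrs L acc \<Longrightarrow> gain L acc v \<ge> 0"
  unfolding gain_def by (cases "acc v") (auto dest!: accept_props)

lemma gain_ge2: "valid_accept V nbrs L acc \<Longrightarrow> acc v \<noteq> None \<Longrightarrow> gain L acc v \<ge> 2"
proof -
  assume va: "valid_accept V nbrs L acc" and "acc v \<noteq> None"
  then obtain w where a: "acc v = Some w" by auto
  from accept_props[OF va a] have "prop_val L w v \<ge> 1" "L w - L v - prop_val L w v \<ge> 1" by auto
  hence "prop_val L w v * (L w - L v - prop_val L w v) \<ge> 1" by (metis mult_le_cancel_left1 order.trans zero_less_one_class.zero_le_one not_le mult.commute)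
  thus ?thesis unfolding gain_def a by simp
qed

lemma gain_ge_sq: "valid_accept V nbrs L acc \<Longrightarrow> gain L acc v \<ge> 2 * (inv L acc v)^2"
proof (cases "acc v")
  case (Some w)
  assume va: "valid_accept V nbrs L acc"
  from accept_props[OF va Some] have "prop_val L w v \<le> L w - L v - prop_val L w v" "prop_val L w v \<ge> 0" by auto
  hence "prop_val L w v * prop_val L w v \<le> prop_val L w v * (L w - L v - prop_val L w v)" by (simp add: mult_left_mono)
  thus ?thesis unfolding gain_def inv_def Some by (simp add: power2_eq_square)
qed (simp add: gain_def inv_def)


lemma outv_eq:
  assumes va: "valid_accept V nbrs L acc"
  shows "outv L acc u = (if target nbrs L u \<in> V \<and> acc (target nbrs L u) = Some u then prop_val L u (target nbrs L u) else 0)"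
  unfolding outv_def by (rule sum_single[OF finV]) (metis out_unique[OF va])

lemma new_le_max:
  assumes va: "valid_accept V nbrs L acc" and u: "u \<in> V"
  shows "apply_transfers V L acc u \<le> Lmax V L"
proof -
  have m: "\<And>x. x \<in> V \<Longrightarrow> L x \<le> Lmax V L" unfolding Lmax_def using finV by auto
  have "L u + inv L acc u \<le> Lmax V L"
  proof (cases "acc u")
    case None thus ?thesis using m[OF u] by (simp add: inv_def)
  next
    case (Some w) from accept_props[OF va Some] m[of w] show ?thesis by (simp add: inv_def Some)
  qed
  thus ?thesis unfolding at_eq using outv_nonneg[OF va, of u] by simp
qed

lemma new_ge_min:
  assumes va: "valid_accept V nbrs L acc" and u: "u \<in> V"
  shows "apply_transfers V L acc u \<ge> Lmin V L"
proof -
  have m: "\<And>x. x \<in> V \<Longrightarrow> L x \<ge> Lmin V L" unfolding Lmin_def using finV by auto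
  let ?t = "target nbrs L u"
  have "L u - outv L acc u \<ge> Lmin V L"
  proof (cases "?t \<in> V \<and> acc ?t = Some u")
    case False thus ?thesis using m[OF u] by (auto simp: outv_eq[OF va])
  next
    case True
    from accept_props[OF va True[THEN conjunct2]] m[of ?t] True show ?thesis by (simp add: outv_eq[OF va])
  qed
  thus ?thesis unfolding at_eq using inv_nonneg[OF va, of u] by simp
qed

lemma walk_cross:
  assumes "xs \<noteq> []" "L (hd xs) > \<theta>" "L (last xs) \<le> (\<theta>::int)"
  shows "\<exists>i. Suc i < length xs \<and> L (xs ! Suc i) \<le> \<theta> \<and> \<theta> < L (xs ! i)"
  using assms
proof (induction xs)
  case Nil thus ?case by simp
next
  case (Cons x xs)
  show ?case
  proof (cases "xs = []")
    case True thus ?thesis using Cons.prems by simp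
  next
    case False
    show ?thesis
    proof (cases "L (hd xs) \<le> \<theta>")
      case True
      thus ?thesis using False Cons.prems by (intro exI[of _ 0]) (auto simp: hd_conv_nth)
    next
      case F2: False
      from Cons.IH[OF False] F2 Cons.prems False obtain i where
        "Suc i < length xs" "L (xs ! Suc i) \<le> \<theta>" "\<theta> < L (xs ! i)" by auto
      thus ?thesis by (intro exI[of _ "Suc i"]) auto
    qed
  qed
qed

lemma cover:
  assumes va: "valid_accept V nbrs L acc" and wk: "walk E xs" and len: "length xs = Suc k"
    and K: "L (hd xs) - L (last xs) \<ge> 2 * int k"
  shows "(L (hd xs) - L (last xs))^2 \<le> 8 * int k * (\<Sum>v\<in>V. gain L acc v)"
proof -
  define K where "K = L (hd xs) - L (last xs)"
  define A where "A = {i. i < k \<and> L (xs!i) - L (xs!Suc i) \<ge> 2}"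
  define B where "B = {i. i < k \<and> L (xs!i) - L (xs!Suc i) = 1}"
  define R where "R = (\<lambda>i. target nbrs L (xs!i)) ` A"
  define S where "S = (\<lambda>i. L (xs!Suc i)) ` B"
  let ?q = "inv L acc"
  have xsne: "xs \<noteq> []" using len by auto
  have edge: "\<And>i. i < k \<Longrightarrow> E (xs!i) (xs!Suc i)" using wk len unfolding walk_def by auto
  have RV: "R \<subseteq> V"
  proof
    fix u assume "u \<in> R"
    then obtain i where i: "i \<in> A" "u = target nbrs L (xs!i)" unfolding R_def by auto
    have e: "E (xs!i) (xs!Suc i)" using edge i unfolding A_def by auto
    hence xV: "xs!i \<in> V" using E_V by auto
    have "xs!Suc i \<in> set (nbrs (xs!i))" using nbrs_set[OF xV] e by auto
    hence "proposes nbrs L (xs!i)" using i unfolding A_def proposes_def by force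
    from target_props[OF xV this] have "E (xs!i) u" using nbrs_set[OF xV] i by auto
    thus "u \<in> V" using E_V by auto
  qed
  have sub: "{L (last xs) ..< L (hd xs)} \<subseteq> (\<Union>u\<in>R. {L u ..< L u + 2 * ?q u + 1}) \<union> S"
  proof
    fix \<theta> assume "\<theta> \<in> {L (last xs) ..< L (hd xs)}"
    then obtain i where i: "Suc i < length xs" "L (xs ! Suc i) \<le> \<theta>" "\<theta> < L (xs ! i)"
      using walk_cross[OF xsne, where L=L and \<theta>=\<theta>] by auto
    have ik: "i < k" using i len by simp
    show "\<theta> \<in> (\<Union>u\<in>R. {L u ..< L u + 2 * ?q u + 1}) \<union> S"
    proof (cases "L (xs!i) - L (xs!Suc i) \<ge> 2")
      case False
      hence "i \<in> B" "\<theta> = L (xs!Suc i)" using i ik unfolding B_def by auto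
      thus ?thesis unfolding S_def by auto
    next
      case True
      hence iA: "i \<in> A" using ik unfolding A_def by auto
      let ?x = "xs!i" and ?y = "xs!Suc i"
      let ?t = "target nbrs L ?x"
      have e: "E ?x ?y" using edge ik by auto
      hence xV: "?x \<in> V" using E_V by auto
      have yn: "?y \<in> set (nbrs ?x)" using nbrs_set[OF xV] e by auto
      hence pr: "proposes nbrs L ?x" using True unfolding proposes_def by force
      from target_props[OF xV pr] yn have tp: "?t \<in> set (nbrs ?x)" "L ?t \<le> L ?y" by auto
      have tV: "?t \<in> V" using tp(1) nbrs_set[OF xV] E_V by auto
      have prp: "proposal nbrs L ?x ?t" unfolding proposal_def using pr by simp
      have "acc ?t \<noteq> None" using va tV xV prp unfolding valid_accept_def by blast
      then obtain w where aw: "acc ?t = Some w" by auto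
      from accept_props[OF va aw] xV prp have "prop_val L ?x ?t \<le> prop_val L w ?t" by blast
      hence "L ?x - L ?t \<le> 2 * ?q ?t + 1" unfolding inv_def aw by (simp add: pv_div)
      hence "\<theta> \<in> {L ?t ..< L ?t + 2 * ?q ?t + 1}" using i tp by auto
      moreover have "?t \<in> R" unfolding R_def using iA by auto
      ultimately show ?thesis by blast
    qed
  qed
  have finR: "finite R" unfolding R_def A_def by auto
  have finS: "finite S" unfolding S_def B_def by auto
  have "nat K = card {L (last xs) ..< L (hd xs)}" unfolding K_def by simp
  also have "\<dots> \<le> card ((\<Union>u\<in>R. {L u ..< L u + 2 * ?q u + 1}) \<union> S)"
    by (rule card_mono) (use finR finS sub in auto)
  also have "\<dots> \<le> card (\<Union>u\<in>R. {L u ..< L u + 2 * ?q u + 1}) + card S" by (rule card_Un_le)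
  also have "card (\<Union>u\<in>R. {L u ..< L u + 2 * ?q u + 1}) \<le> (\<Sum>u\<in>R. card {L u ..< L u + 2 * ?q u + 1})"
    by (rule card_UN_le[OF finR])
  finally have c1: "int (nat K) \<le> int (\<Sum>u\<in>R. card {L u ..< L u + 2 * ?q u + 1}) + int (card S)" by linarith
  have "int (\<Sum>u\<in>R. card {L u ..< L u + 2 * ?q u + 1}) = (\<Sum>u\<in>R. 2 * ?q u + 1)"
    unfolding of_nat_sum by (rule sum.cong) (use inv_nonneg[OF va] in auto)
  also have "\<dots> = 2 * (\<Sum>u\<in>R. ?q u) + int (card R)" by (simp add: sum.distrib sum_distrib_left)
  finally have c2: "K \<le> 2 * (\<Sum>u\<in>R. ?q u) + int (card R) + int (card S)" using c1 K K_def by linarith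
  have cR: "card R \<le> card A" unfolding R_def by (rule card_image_le) (simp add: A_def)
  have cS: "card S \<le> card B" unfolding S_def by (rule card_image_le) (simp add: B_def)
  have "card A + card B = card (A \<union> B)" by (rule card_Un_disjoint[symmetric]) (auto simp: A_def B_def)
  also have "\<dots> \<le> card {..<k}" by (rule card_mono) (auto simp: A_def B_def)
  finally have cAB: "card A + card B \<le> k" by simp
  have c3: "K - int k \<le> 2 * (\<Sum>u\<in>R. ?q u)" using c2 cR cS cAB by linarith
  have kR: "int (card R) \<le> int k" using cR cAB by linarith
  have Kk: "0 \<le> K - int k" "K \<le> 2 * (K - int k)" using K K_def by auto
  have "(K - int k)^2 \<le> (2 * (\<Sum>u\<in>R. ?q u))^2" using c3 Kk by (intro power_mono) auto
  also have "\<dots> = 4 * (\<Sum>u\<in>R. ?q u)^2" by (simp add: power2_eq_square)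
  also have "\<dots> \<le> 4 * (int (card R) * (\<Sum>u\<in>R. (?q u)^2))" using cs_int[OF finR] by simp
  also have "\<dots> \<le> 4 * (int k * (\<Sum>u\<in>R. (?q u)^2))"
    using kR by (intro mult_left_mono mult_right_mono sum_nonneg) auto
  also have "(\<Sum>u\<in>R. (?q u)^2) * 2 \<le> (\<Sum>u\<in>R. gain L acc u)"
    unfolding sum_distrib_right by (rule sum_mono) (metis gain_ge_sq[OF va] mult.commute)
  hence "4 * (int k * (\<Sum>u\<in>R. (?q u)^2)) \<le> 2 * int k * (\<Sum>u\<in>R. gain L acc u)"
    by (simp add: algebra_simps mult_left_mono)
  also have "(\<Sum>u\<in>R. gain L acc u) \<le> (\<Sum>u\<in>V. gain L acc u)"
    by (rule sum_mono2[OF finV RV]) (use gain_nonneg[OF va] in auto)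
  hence "2 * int k * (\<Sum>u\<in>R. gain L acc u) \<le> 2 * int k * (\<Sum>u\<in>V. gain L acc u)" by (simp add: mult_left_mono)
  finally have "(K - int k)^2 \<le> 2 * int k * (\<Sum>u\<in>V. gain L acc u)" .
  moreover have "K^2 \<le> 4 * (K - int k)^2"
  proof -
    have "K^2 \<le> (2 * (K - int k))^2" using Kk K K_def by (intro power_mono) auto
    also have "(2 * (K - int k))^2 = 4 * (K - int k)^2" by (simp add: power2_eq_square algebra_simps)
    finally show ?thesis .
  qed
  ultimately show ?thesis unfolding K_def by linarith
qed


lemma balanced_none:
  assumes va: "valid_accept V nbrs L acc" and b: "one_balanced E L"
  shows "acc u = None"
proof (cases "u \<in> V")
  case False thus ?thesis using no_accept_outside[OF va] by simp
next
  case True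
  have "\<not> (\<exists>w\<in>V. proposal nbrs L w u)"
  proof
    assume "\<exists>w\<in>V. proposal nbrs L w u"
    then obtain w where w: "w \<in> V" "proposes nbrs L w" unfolding proposal_def by auto
    then obtain v where "v \<in> set (nbrs w)" "L v \<le> L w - 2" unfolding proposes_def by auto
    hence "E w v" "L v \<le> L w - 2" using nbrs_set[OF w(1)] by auto
    thus False using b unfolding one_balanced_def by force
  qed
  thus ?thesis using va True unfolding valid_accept_def by blast
qed

lemma balanced_static:
  assumes va: "valid_accept V nbrs L acc" and b: "one_balanced E L"
  shows "apply_transfers V L acc = L"
proof
  fix u
  have "inv L acc u = 0" unfolding inv_def using balanced_none[OF va b] by simp
  moreover have "outv L acc u = 0" unfolding outv_def using balanced_none[OF va b] by simp
  ultimately show "apply_transfers V L acc u = L u" unfolding at_eq by simp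
qed

lemma unbalanced_gain:
  assumes va: "valid_accept V nbrs L acc" and b: "\<not> one_balanced E L"
  shows "(\<Sum>v\<in>V. gain L acc v) \<ge> 2"
proof -
  obtain x y where xy: "E x y" "L y \<le> L x - 2"
  proof -
    from b obtain u v where "E u v" "\<bar>L u - L v\<bar> > 1" unfolding one_balanced_def by force
    thus thesis using that E_sym by (cases "L v \<le> L u") force+
  qed
  have xV: "x \<in> V" using xy E_V by auto
  have pr: "proposes nbrs L x" using xy nbrs_set[OF xV] unfolding proposes_def by force
  let ?t = "target nbrs L x"
  have tV: "?t \<in> V" using target_props[OF xV pr] nbrs_set[OF xV] E_V by auto
  have "proposal nbrs L x ?t" unfolding proposal_def using pr by simp
  hence "acc ?t \<noteq> None" using va tV xV unfolding valid_accept_def by blast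
  hence "gain L acc ?t \<ge> 2" by (rule gain_ge2[OF va])
  also have "gain L acc ?t \<le> (\<Sum>v\<in>V. gain L acc v)"
    by (rule member_le_sum[OF tV]) (use gain_nonneg[OF va] finV in auto)
  finally show ?thesis .
qed

end

lemma walk_gdist:
  assumes "connected_graph V E" "u \<in> V" "v \<in> V"
  shows "\<exists>xs. walk E xs \<and> hd xs = u \<and> last xs = v \<and> length xs = Suc (gdist E u v)"
proof -
  from assms obtain xs where xs: "walk E xs" "hd xs = u" "last xs = v" unfolding connected_graph_def by blast
  hence "xs \<noteq> []" unfolding walk_def by auto
  hence "\<exists>xs'. walk E xs' \<and> hd xs' = u \<and> last xs' = v \<and> length xs' = Suc (length xs - 1)"
    using xs by (intro exI[of _ xs]) auto
  hence "\<exists>k xs'. walk E xs' \<and> hd xs' = u \<and> last xs' = v \<and> length xs' = Suc k" by blast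
  thus ?thesis unfolding gdist_def by (rule LeastI_ex)
qed

lemma gdist_le_diam:
  assumes "finite V" "u \<in> V" "v \<in> V"
  shows "gdist E u v \<le> diameter V E"
proof -
  have eq: "{gdist E u v | u v. u \<in> V \<and> v \<in> V} = (\<lambda>(u,v). gdist E u v) ` (V \<times> V)" by auto
  show ?thesis unfolding diameter_def eq using assms by (intro Max_ge) auto
qed

lemma diam_pos:
  assumes "finite V" "connected_graph V E" "card V \<ge> 2"
  shows "diameter V E \<ge> 1"
proof -
  obtain u v where uv: "u \<in> V" "v \<in> V" "u \<noteq> v"
  proof -
    have "\<not> (\<forall>u\<in>V. \<forall>v\<in>V. u = v)"
    proof
      assume "\<forall>u\<in>V. \<forall>v\<in>V. u = v"
      hence "card V \<le> 1" using card_le_Suc0_iff_eq[OF assms(1)] by simp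
      thus False using assms by simp
    qed
    thus thesis using that by blast
  qed
  from walk_gdist[OF assms(2) uv(1,2)] obtain xs where xs: "walk E xs" "hd xs = u" "last xs = v"
    "length xs = Suc (gdist E u v)" by blast
  have "gdist E u v \<noteq> 0"
  proof
    assume "gdist E u v = 0"
    then obtain x where "xs = [x]" using xs(4) by (cases xs) auto
    thus False using xs uv by simp
  qed
  thus ?thesis using gdist_le_diam[OF assms(1) uv(1,2), of E] by linarith
qed

lemma avg_bounds:
  fixes L :: "'a \<Rightarrow> int"
  assumes fin: "finite V" "V \<noteq> {}" and a: "real (card V) * a = real_of_int (\<Sum>u\<in>V. L u)"
  shows "real_of_int (Lmin V L) \<le> a" "a \<le> real_of_int (Lmax V L)"
proof -
  have c: "real (card V) > 0" using fin by (simp add: card_gt_0_iff)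
  have "(\<Sum>u\<in>V. L u) \<le> (\<Sum>u\<in>V. Lmax V L)" by (rule sum_mono) (use fin in \<open>auto simp: Lmax_def\<close>)
  hence "(\<Sum>u\<in>V. L u) \<le> int (card V) * Lmax V L" by simp
  hence "real_of_int (\<Sum>u\<in>V. L u) \<le> real_of_int (int (card V) * Lmax V L)" by (simp only: of_int_le_iff)
  hence "real_of_int (\<Sum>u\<in>V. L u) \<le> real (card V) * real_of_int (Lmax V L)" by simp
  thus "a \<le> real_of_int (Lmax V L)" using a c by (metis mult_le_cancel_left_pos)
  have "(\<Sum>u\<in>V. Lmin V L) \<le> (\<Sum>u\<in>V. L u)" by (rule sum_mono) (use fin in \<open>auto simp: Lmin_def\<close>)
  hence "int (card V) * Lmin V L \<le> (\<Sum>u\<in>V. L u)" by simp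
  hence "real_of_int (int (card V) * Lmin V L) \<le> real_of_int (\<Sum>u\<in>V. L u)" by (simp only: of_int_le_iff)
  hence "real (card V) * real_of_int (Lmin V L) \<le> real_of_int (\<Sum>u\<in>V. L u)" by simp
  thus "real_of_int (Lmin V L) \<le> a" using a c by (metis mult_le_cancel_left_pos)
qed

lemma Phi_up:
  fixes L :: "'a \<Rightarrow> int"
  assumes fin: "finite V" "V \<noteq> {}" and a: "real (card V) * a = real_of_int (\<Sum>u\<in>V. L u)"
  shows "(\<Sum>u\<in>V. (real_of_int (L u) - a)^2) \<le> real (card V) * real_of_int (discrepancy V L)^2"
proof -
  note ab = avg_bounds[OF fin a]
  have "(\<Sum>u\<in>V. (real_of_int (L u) - a)^2) \<le> (\<Sum>u\<in>V. real_of_int (discrepancy V L)^2)"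
  proof (rule sum_mono)
    fix u assume u: "u \<in> V"
    have "L u \<le> Lmax V L" "Lmin V L \<le> L u" using fin u by (auto simp: Lmax_def Lmin_def)
    hence "\<bar>real_of_int (L u) - a\<bar> \<le> \<bar>real_of_int (discrepancy V L)\<bar>" using ab unfolding discrepancy_def by auto
    thus "(real_of_int (L u) - a)^2 \<le> real_of_int (discrepancy V L)^2" by (simp add: abs_le_square_iff)
  qed
  thus ?thesis by simp
qed

lemma Phi_lo:
  fixes L :: "'a \<Rightarrow> int"
  assumes fin: "finite V" "V \<noteq> {}" and K: "discrepancy V L \<ge> 1"
  shows "(\<Sum>u\<in>V. (real_of_int (L u) - a)^2) \<ge> real_of_int (discrepancy V L)^2 / 2"
proof -
  have "Lmax V L \<in> L ` V" unfolding Lmax_def using fin by (intro Max_in) auto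
  then obtain x where x: "x \<in> V" "L x = Lmax V L" by auto
  have "Lmin V L \<in> L ` V" unfolding Lmin_def using fin by (intro Min_in) auto
  then obtain y where y: "y \<in> V" "L y = Lmin V L" by auto
  have xy: "x \<noteq> y" using x y K unfolding discrepancy_def by auto
  have "(\<Sum>u\<in>{x,y}. (real_of_int (L u) - a)^2) \<le> (\<Sum>u\<in>V. (real_of_int (L u) - a)^2)"
    by (rule sum_mono2) (use fin x y in auto)
  moreover have "(\<Sum>u\<in>{x,y}. (real_of_int (L u) - a)^2) = (real_of_int (L x) - a)^2 + (real_of_int (L y) - a)^2"
    using xy by simp
  moreover have "(real_of_int (L x) - a)^2 + (real_of_int (L y) - a)^2 \<ge> (real_of_int (L x) - real_of_int (L y))^2 / 2"
  proof -
    let ?p = "real_of_int (L x)" and ?q = "real_of_int (L y)"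
    have "2 * ((?p - a)^2 + (?q - a)^2) = (?p - ?q)^2 + (?p + ?q - 2 * a)^2"
      by (simp add: power2_eq_square algebra_simps)
    moreover have "(?p + ?q - 2 * a)^2 \<ge> 0" by simp
    ultimately show ?thesis by (simp add: field_simps)
  qed
  moreover have "real_of_int (discrepancy V L) = real_of_int (L x) - real_of_int (L y)"
    unfolding discrepancy_def x y by simp
  ultimately show ?thesis by simp
qed

lemma Phi_eq:
  fixes L :: "'a \<Rightarrow> int"
  assumes "real (card V) * a = real_of_int S" "(\<Sum>u\<in>V. L u) = S"
  shows "(\<Sum>u\<in>V. (real_of_int (L u) - a)^2) = real_of_int (\<Sum>u\<in>V. (L u)^2) - a * real_of_int S"
proof -
  have "(\<Sum>u\<in>V. (real_of_int (L u) - a)^2) = (\<Sum>u\<in>V. (real_of_int (L u)^2 - (2 * a) * real_of_int (L u)) + a^2)"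
    by (rule sum.cong) (auto simp: power2_diff)
  also have "\<dots> = (\<Sum>u\<in>V. real_of_int (L u)^2) - 2 * a * (\<Sum>u\<in>V. real_of_int (L u)) + real (card V) * a^2"
    by (simp add: sum.distrib sum_subtractf sum_distrib_left)
  also have "(\<Sum>u\<in>V. real_of_int (L u)) = real_of_int S" using assms(2) by (metis of_int_sum)
  also have "real (card V) * a^2 = a * real_of_int S" using assms(1) by (simp add: power2_eq_square algebra_simps)
  finally show ?thesis by simp
qed


lemma phase_abstract:
  fixes \<Phi> G :: "nat \<Rightarrow> real" and K :: "nat \<Rightarrow> int" and bal :: "nat \<Rightarrow> bool" and n D :: nat
  assumes n: "n \<ge> 2" and D: "D \<ge> 1"
    and step: "\<And>t. \<Phi> (Suc t) \<le> \<Phi> t - G t"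
    and Kmono: "\<And>t. K (Suc t) \<le> K t"
    and Knn: "\<And>t. K t \<ge> 0"
    and Gbig: "\<And>t. K t \<ge> 2 * int D \<Longrightarrow> 8 * real D * G t \<ge> real_of_int (K t)^2"
    and Gbal: "\<And>t. \<not> bal t \<Longrightarrow> G t \<ge> 2"
    and Phup: "\<And>t. \<Phi> t \<le> real n * real_of_int (K t)^2"
    and Phlo: "\<And>t. K t \<ge> 2 * int D \<Longrightarrow> \<Phi> t \<ge> real_of_int (K t)^2 / 2"
    and Phnn: "\<And>t. \<Phi> t \<ge> 0"
  shows "\<exists>T::nat. real T \<le> (if K 0 \<ge> 2 * int D
                  then (8 * real n * real D + 1) *
                         ln (real_of_int \<lceil>real n * real_of_int (K 0) ^ 2 / (2 * real D ^ 2)\<rceil>)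
                       + 2 * real n * real D ^ 2
                  else 2 * real n * real D ^ 2) \<and> bal T"
proof -
  define r where "r = 1 / (8 * real n * real D)"
  define X where "X = real n * real_of_int (K 0) ^ 2 / (2 * real D ^ 2)"
  have npos: "real n > 0" "real D > 0" using n D by auto
  have nD: "real n * real D \<ge> 2" using n D
    by (metis mult_le_mono nat_mult_1_right of_nat_le_iff of_nat_mult of_nat_numeral)
  have r01: "0 < r" "r < 1" unfolding r_def using nD by (auto simp: field_simps)
  have Kanti: "\<And>t s. t \<le> s \<Longrightarrow> K s \<le> K t"
  proof -
    fix t s :: nat assume "t \<le> s"
    thus "K s \<le> K t"
    proof (induction s)
      case 0 thus ?case by simp
    next
      case (Suc s) thus ?case using Kmono[of s] by (cases "t = Suc s") auto
    qed
  qed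
  have contr: "\<And>t. K t \<ge> 2 * int D \<Longrightarrow> \<Phi> (Suc t) \<le> (1 - r) * \<Phi> t"
  proof -
    fix t assume Kt: "K t \<ge> 2 * int D"
    have "\<Phi> t \<le> real n * real_of_int (K t)^2" by (rule Phup)
    also have "\<dots> \<le> real n * (8 * real D * G t)" using Gbig[OF Kt] npos by simp
    finally have "\<Phi> t * r \<le> G t" unfolding r_def using npos by (simp add: field_simps)
    thus "\<Phi> (Suc t) \<le> (1 - r) * \<Phi> t" using step[of t] by (simp add: algebra_simps)
  qed
  have geo: "\<And>t. (\<forall>s<t. K s \<ge> 2 * int D) \<Longrightarrow> \<Phi> t \<le> (1 - r)^t * \<Phi> 0"
  proof -
    fix t show "(\<forall>s<t. K s \<ge> 2 * int D) \<Longrightarrow> \<Phi> t \<le> (1 - r)^t * \<Phi> 0"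
    proof (induction t)
      case 0 thus ?case by simp
    next
      case (Suc t)
      have "\<Phi> (Suc t) \<le> (1 - r) * \<Phi> t" using contr Suc.prems by auto
      also have "\<dots> \<le> (1 - r) * ((1 - r)^t * \<Phi> 0)" using Suc r01 by (intro mult_left_mono) auto
      finally show ?case by simp
    qed
  qed
  have ph1: "\<And>t. (\<forall>s\<le>t. K s \<ge> 2 * int D) \<Longrightarrow> real t \<le> 8 * real n * real D * ln X"
  proof -
    fix t assume a: "\<forall>s\<le>t. K s \<ge> 2 * int D"
    have Kt: "K t \<ge> 2 * int D" using a by auto
    have "real_of_int (K t) \<ge> 2 * real D" using Kt by linarith
    hence "real_of_int (K t)^2 \<ge> (2 * real D)^2" using npos by (intro power_mono) auto
    hence lo: "\<Phi> t \<ge> 2 * real D^2" using Phlo[OF Kt] by (simp add: power2_eq_square)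
    have "\<Phi> t \<le> (1 - r)^t * \<Phi> 0" using geo a by auto
    also have "\<dots> \<le> (1 - r)^t * (real n * real_of_int (K 0)^2)" using Phup[of 0] r01 by (intro mult_left_mono) auto
    finally have "2 * real D^2 \<le> (1 - r)^t * (real n * real_of_int (K 0)^2)" using lo by linarith
    hence "1 \<le> (1 - r)^t * X" unfolding X_def using npos by (simp add: field_simps)
    moreover have Xpos: "X > 0"
    proof -
      have "0 < (1 - r)^t * X" using \<open>1 \<le> (1 - r)^t * X\<close> by linarith
      thus ?thesis using r01 by (simp add: zero_less_mult_iff)
    qed
    ultimately have "ln 1 \<le> ln ((1 - r)^t * X)" using r01 by (subst ln_le_cancel_iff) auto
    also have "\<dots> = real t * ln (1 - r) + ln X" using r01 Xpos by (simp add: ln_mult ln_realpow)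
    also have "\<dots> \<le> real t * (- r) + ln X"
      using ln_one_minus_pos_upper_bound[of r] r01 by (intro add_right_mono mult_left_mono) auto
    finally have "real t * r \<le> ln X" by simp
    thus "real t \<le> 8 * real n * real D * ln X" unfolding r_def using npos by (simp add: field_simps)
  qed
  define N where "N = 2 * n * D^2"
  have ph2: "\<And>T1. K T1 < 2 * int D \<Longrightarrow> \<exists>j<N. bal (T1 + j)"
  proof (rule ccontr)
    fix T1 assume KT: "K T1 < 2 * int D" and nb: "\<not> (\<exists>j<N. bal (T1 + j))"
    have dec: "\<And>j. j \<le> N \<Longrightarrow> \<Phi> (T1 + j) \<le> \<Phi> T1 - 2 * real j"
    proof -
      fix j show "j \<le> N \<Longrightarrow> \<Phi> (T1 + j) \<le> \<Phi> T1 - 2 * real j"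
      proof (induction j)
        case 0 thus ?case by simp
      next
        case (Suc j)
        have "G (T1 + j) \<ge> 2" using nb Suc.prems by (intro Gbal) auto
        thus ?case using step[of "T1 + j"] Suc by auto
      qed
    qed
    have "real_of_int (K T1) \<le> 2 * real D - 1" using KT by linarith
    hence "real_of_int (K T1)^2 \<le> (2 * real D - 1)^2" using Knn[of T1] by (intro power_mono) auto
    hence "\<Phi> T1 \<le> real n * (2 * real D - 1)^2" using Phup[of T1] npos
      by (meson mult_left_mono order.trans less_imp_le)
    also have "\<dots> < 2 * real N" unfolding N_def using npos
      by (simp add: power2_eq_square algebra_simps)
    finally have "\<Phi> (T1 + N) < 0" using dec[of N] by auto
    thus False using Phnn[of "T1 + N"] by simp
  qed
  show ?thesis
  proof (cases "K 0 \<ge> 2 * int D")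
    case False
    then obtain j where j: "j < N" "bal (0 + j)" using ph2[of 0] by auto
    have "j \<le> 2 * n * D^2" using j unfolding N_def by simp
    hence "real j \<le> real (2 * n * D^2)" by (rule of_nat_mono)
    hence "real j \<le> 2 * real n * real D^2" by simp
    thus ?thesis using False j by (intro exI[of _ j]) auto
  next
    case True
    define m where "m = nat \<lceil>8 * real n * real D * ln X\<rceil> + 1"
    have "\<not> (\<forall>s\<le>m. K s \<ge> 2 * int D)"
    proof
      assume "\<forall>s\<le>m. K s \<ge> 2 * int D"
      from ph1[OF this] show False unfolding m_def by linarith
    qed
    then obtain s where s: "K s < 2 * int D" using not_le by blast
    define T1 where "T1 = (LEAST s. K s < 2 * int D)"
    have T1: "K T1 < 2 * int D" unfolding T1_def using s by (rule LeastI)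
    have T1pos: "T1 > 0" using T1 True by (cases T1) auto
    have "\<forall>s'\<le>T1 - 1. K s' \<ge> 2 * int D"
    proof (intro allI impI)
      fix s' assume "s' \<le> T1 - 1"
      hence "s' < T1" using T1pos by auto
      thus "K s' \<ge> 2 * int D" unfolding T1_def using not_less_Least by force
    qed
    from ph1[OF this] have b1: "real (T1 - 1) \<le> 8 * real n * real D * ln X" .
    obtain j where j: "j < N" "bal (T1 + j)" using ph2[OF T1] by auto
    have Xpos: "X \<ge> 1"
    proof -
      have "real_of_int (K 0) \<ge> 2 * real D" using True by linarith
      hence "real_of_int (K 0)^2 \<ge> (2 * real D)^2" using npos by (intro power_mono) auto
      hence "real n * real_of_int (K 0)^2 \<ge> real n * (2 * real D)^2" using npos by simp
      hence "real n * real_of_int (K 0)^2 \<ge> 2 * real D^2" using n npos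
        by (smt (verit) four_x_squared mult_le_cancel_right1 of_nat_1 of_nat_le_iff one_le_numeral order_trans zero_le_power2)
      thus ?thesis unfolding X_def using npos by (simp add: field_simps)
    qed
    have lnX: "ln X \<le> ln (real_of_int \<lceil>X\<rceil>)" using Xpos by (subst ln_le_cancel_iff) auto
    have lnc: "0 \<le> ln (real_of_int \<lceil>X\<rceil>)" using Xpos by (simp add: ln_ge_zero_iff)
    have "real (T1 + j) \<le> real (T1 - 1) + real N" using j T1pos by simp
    also have "\<dots> \<le> 8 * real n * real D * ln X + 2 * real n * real D^2" using b1 unfolding N_def by simp
    also have "\<dots> \<le> (8 * real n * real D + 1) * ln (real_of_int \<lceil>X\<rceil>) + 2 * real n * real D^2"
      using lnX lnc npos by (simp add: distrib_right) (meson mult_left_mono order.trans le_add_same_cancel1 mult_nonneg_nonneg of_nat_0_le_iff zero_le_numeral)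
    finally show ?thesis using True j unfolding X_def by (intro exI[of _ "T1 + j"]) auto
  qed
qed


theorem theorem2:
  fixes V :: "'a set" and E :: "'a \<Rightarrow> 'a \<Rightarrow> bool" and nbrs :: "'a \<Rightarrow> 'a list"
    and Ls :: "nat \<Rightarrow> 'a \<Rightarrow> int" and accs :: "nat \<Rightarrow> 'a \<Rightarrow> 'a option"
  assumes "graph V E" and "connected_graph V E" and "neighbor_order V E nbrs"
    and "card V \<ge> 2"
    and "\<forall>u\<in>V. Ls 0 u \<ge> 0"
    and "execution V nbrs Ls accs"
  shows "monotonic_execution V Ls accs \<and>
    (let n = card V; D = diameter V E; K = discrepancy V (Ls 0);
         bound = (if K \<ge> 2 * int D
                  then (8 * real n * real D + 1) *
                         ln (real_of_int \<lceil>real n * real_of_int K ^ 2 / (2 * real D ^ 2)\<rceil>)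
                       + 2 * real n * real D ^ 2
                  else 2 * real n * real D ^ 2)
     in \<exists>T::nat. real T \<le> bound \<and>
          (\<forall>t\<ge>T. one_balanced E (Ls t) \<and> (\<forall>u\<in>V. Ls t u = Ls T u)))"
proof -
  interpret G V E nbrs using assms(1,3) by unfold_locales
  have Vne: "V \<noteq> {}" using assms(4) by auto
  have va: "\<And>t. valid_accept V nbrs (Ls t) (accs t)" and st: "\<And>t. Ls (Suc t) = apply_transfers V (Ls t) (accs t)"
    using assms(6) unfolding execution_def by auto
  define n where "n = card V"
  define D where "D = diameter V E"
  define S0 where "S0 = (\<Sum>u\<in>V. Ls 0 u)"
  have n2: "n \<ge> 2" unfolding n_def using assms(4) .
  have D1: "D \<ge> 1" unfolding D_def using diam_pos[OF finV assms(2,4)] .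
  have cons: "\<And>t. (\<Sum>u\<in>V. Ls t u) = S0"
  proof -
    fix t show "(\<Sum>u\<in>V. Ls t u) = S0"
      by (induction t) (simp_all add: S0_def st sum_conserve[OF va])
  qed
  define a where "a = real_of_int S0 / real n"
  have na: "real n * a = real_of_int S0" unfolding a_def using n2 by simp
  have nat: "\<And>t. real (card V) * a = real_of_int (\<Sum>u\<in>V. Ls t u)" using na cons unfolding n_def by simp
  define \<Phi> where "\<Phi> t = (\<Sum>u\<in>V. (real_of_int (Ls t u) - a)^2)" for t
  define Gt where "Gt t = real_of_int (\<Sum>v\<in>V. gain (Ls t) (accs t) v)" for t
  define Kt where "Kt t = discrepancy V (Ls t)" for t
  have maxmono: "\<And>t. Lmax V (Ls (Suc t)) \<le> Lmax V (Ls t)"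
    unfolding Lmax_def[of V "Ls (Suc t)" for t] using finV Vne new_le_max[OF va] st by (auto simp: Max_le_iff)
  have minmono: "\<And>t. Lmin V (Ls t) \<le> Lmin V (Ls (Suc t))"
    unfolding Lmin_def[of V "Ls (Suc t)" for t] using finV Vne new_ge_min[OF va] st by (auto simp: Min_ge_iff)
  have monoex: "monotonic_execution V Ls accs"
    unfolding monotonic_execution_def using maxmono minmono accept_props[OF va] by force
  have step: "\<And>t. \<Phi> (Suc t) \<le> \<Phi> t - Gt t"
  proof -
    fix t
    have e1: "\<Phi> (Suc t) = real_of_int (\<Sum>u\<in>V. (Ls (Suc t) u)^2) - a * real_of_int S0"
      unfolding \<Phi>_def by (rule Phi_eq) (use na cons n_def in auto)
    have e2: "\<Phi> t = real_of_int (\<Sum>u\<in>V. (Ls t u)^2) - a * real_of_int S0"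
      unfolding \<Phi>_def by (rule Phi_eq) (use na cons n_def in auto)
    have "(\<Sum>u\<in>V. (Ls (Suc t) u)^2) \<le> (\<Sum>u\<in>V. (Ls t u)^2) - (\<Sum>v\<in>V. gain (Ls t) (accs t) v)"
      unfolding st by (rule Q_decrease[OF va])
    hence "real_of_int (\<Sum>u\<in>V. (Ls (Suc t) u)^2) \<le> real_of_int (\<Sum>u\<in>V. (Ls t u)^2) - Gt t"
      unfolding Gt_def by linarith
    thus "\<Phi> (Suc t) \<le> \<Phi> t - Gt t" using e1 e2 by linarith
  qed
  have Kmono: "\<And>t. Kt (Suc t) \<le> Kt t" unfolding Kt_def discrepancy_def using maxmono minmono
    by (smt (verit))
  have Knn: "\<And>t. Kt t \<ge> 0"
  proof -
    fix t
    have "real_of_int (Lmin V (Ls t)) \<le> real_of_int (Lmax V (Ls t))"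
      using avg_bounds[OF finV Vne nat[of t]] by linarith
    thus "Kt t \<ge> 0" unfolding Kt_def discrepancy_def by simp
  qed
  have Gbig: "\<And>t. Kt t \<ge> 2 * int D \<Longrightarrow> 8 * real D * Gt t \<ge> real_of_int (Kt t)^2"
  proof -
    fix t assume KD: "Kt t \<ge> 2 * int D"
    let ?L = "Ls t"
    have "Lmax V ?L \<in> ?L ` V" unfolding Lmax_def using finV Vne by (intro Max_in) auto
    then obtain x where x: "x \<in> V" "?L x = Lmax V ?L" by auto
    have "Lmin V ?L \<in> ?L ` V" unfolding Lmin_def using finV Vne by (intro Min_in) auto
    then obtain y where y: "y \<in> V" "?L y = Lmin V ?L" by auto
    obtain xs where xs: "walk E xs" "hd xs = x" "last xs = y" "length xs = Suc (gdist E x y)"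
      using walk_gdist[OF assms(2) x(1) y(1)] by blast
    have kD: "gdist E x y \<le> D" unfolding D_def by (rule gdist_le_diam[OF finV x(1) y(1)])
    have K: "?L (hd xs) - ?L (last xs) = Kt t" unfolding Kt_def discrepancy_def xs x y by simp
    have "Kt t \<ge> 2 * int (gdist E x y)" using KD kD by linarith
    from cover[OF va[of t] xs(1) xs(4)] this K
    have c: "(Kt t)^2 \<le> 8 * int (gdist E x y) * (\<Sum>v\<in>V. gain ?L (accs t) v)" by simp
    have g0: "(\<Sum>v\<in>V. gain ?L (accs t) v) \<ge> 0" by (rule sum_nonneg) (use gain_nonneg[OF va] in auto)
    have "8 * int (gdist E x y) * (\<Sum>v\<in>V. gain ?L (accs t) v) \<le> 8 * int D * (\<Sum>v\<in>V. gain ?L (accs t) v)"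
      using kD g0 by (intro mult_right_mono) auto
    with c have "(Kt t)^2 \<le> 8 * int D * (\<Sum>v\<in>V. gain ?L (accs t) v)" by linarith
    hence "real_of_int ((Kt t)^2) \<le> real_of_int (8 * int D * (\<Sum>v\<in>V. gain ?L (accs t) v))"
      by (simp only: of_int_le_iff)
    thus "8 * real D * Gt t \<ge> real_of_int (Kt t)^2" unfolding Gt_def by simp
  qed
  have Gbal: "\<And>t. \<not> one_balanced E (Ls t) \<Longrightarrow> Gt t \<ge> 2"
    unfolding Gt_def using unbalanced_gain[OF va] by (metis of_int_le_iff of_int_numeral)
  have Phup: "\<And>t. \<Phi> t \<le> real n * real_of_int (Kt t)^2"
    unfolding \<Phi>_def Kt_def n_def using Phi_up[OF finV Vne nat] .
  have Phlo: "\<And>t. Kt t \<ge> 2 * int D \<Longrightarrow> \<Phi> t \<ge> real_of_int (Kt t)^2 / 2"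
  proof -
    fix t assume "Kt t \<ge> 2 * int D"
    hence "discrepancy V (Ls t) \<ge> 1" unfolding Kt_def using D1 by linarith
    from Phi_lo[OF finV Vne this, of a] show "\<Phi> t \<ge> real_of_int (Kt t)^2 / 2" unfolding \<Phi>_def Kt_def .
  qed
  have Phnn: "\<And>t. \<Phi> t \<ge> 0" unfolding \<Phi>_def by (intro sum_nonneg) auto
  from phase_abstract[where \<Phi>=\<Phi> and G=Gt and K=Kt and bal="\<lambda>t. one_balanced E (Ls t)" and n=n and D=D, OF n2 D1 step Kmono Knn Gbig Gbal Phup Phlo Phnn]
  obtain T where T: "real T \<le> (if Kt 0 \<ge> 2 * int D
                  then (8 * real n * real D + 1) *
                         ln (real_of_int \<lceil>real n * real_of_int (Kt 0) ^ 2 / (2 * real D ^ 2)\<rceil>)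
                       + 2 * real n * real D ^ 2
                  else 2 * real n * real D ^ 2)" and bT: "one_balanced E (Ls T)" by blast
  have stay: "\<And>t. t \<ge> T \<Longrightarrow> one_balanced E (Ls t) \<and> Ls t = Ls T"
  proof -
    fix t assume "t \<ge> T"
    thus "one_balanced E (Ls t) \<and> Ls t = Ls T"
    proof (induction t rule: dec_induct)
      case base thus ?case using bT by simp
    next
      case (step m)
      hence b: "one_balanced E (Ls m)" by blast
      have "Ls (Suc m) = Ls m" using st[of m] balanced_static[OF va[of m] b] by simp
      show ?case
      proof
        show "one_balanced E (Ls (Suc m))" unfolding \<open>Ls (Suc m) = Ls m\<close> by (rule b)
        show "Ls (Suc m) = Ls T" unfolding \<open>Ls (Suc m) = Ls m\<close> using step.IH by blast
      qed
    qed
  qed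
  have T': "real T \<le> (if discrepancy V (Ls 0) \<ge> 2 * int (diameter V E)
                  then (8 * real (card V) * real (diameter V E) + 1) *
                         ln (real_of_int \<lceil>real (card V) * real_of_int (discrepancy V (Ls 0)) ^ 2 / (2 * real (diameter V E) ^ 2)\<rceil>)
                       + 2 * real (card V) * real (diameter V E) ^ 2
                  else 2 * real (card V) * real (diameter V E) ^ 2)"
    using T unfolding n_def D_def Kt_def .
  have st2: "\<forall>t\<ge>T. one_balanced E (Ls t) \<and> (\<forall>u\<in>V. Ls t u = Ls T u)"
  proof (intro allI impI conjI ballI)
    fix t u assume "T \<le> t"
    from stay[OF this] show "one_balanced E (Ls t)" "Ls t u = Ls T u" by auto
  qed
  show ?thesis unfolding Let_def
    by (rule conjI[OF monoex], rule exI[of _ T], rule conjI[OF T' st2])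
qed

end
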